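(* In the setting of the context, for all $X,Y,Z,W\in\Gamma(\mathcal F)$, \[ g_{\mathcal F}\big(R^{\mathcal F,0}(X,Y)Z+R^{\mathcal F,0}(Z,X)Y+R^{\mathcal F,0}(Y,Z)X,\,W\big) =\tfrac12\Big((L_{\widetilde\Omega_{\mathcal F}(Y,Z)}g_{\mathcal F})(X,W)+(L_{\widetilde\Omega_{\mathcal F}(X,Y)}g_{\mathcal F})(Z,W)+(L_{\widetilde\Omega_{\mathcal F}(Z,X)}g_{\mathcal F})(Y,W)\Big). \]
   Context: $M$ is a smooth manifold with a distribution $\mathcal F$ with fiber metric $g_{\mathcal F}$ and a complementary distribution $\mathcal T$ ($TM=\mathcal F\oplus\mathcal T$); $X^{\mathcal F},X^{\mathcal T}$ denote components. $\nabla^{\mathcal F,0}$ is the connection on $\mathcal F$ defined, for $X,Y,Z\in\Gamma(\mathcal F)$ and $U\in\Gamma(\mathcal T)$, by $2g_{\mathcal F}(\nabla^{\mathcal F,0}_XY,Z)=Xg_{\mathcal F}(Y,Z)+Yg_{\mathcal F}(Z,X)-Zg_{\mathcal F}(X,Y)-g_{\mathcal F}(Y,[X,Z]^{\mathcal F})-g_{\mathcal F}(Z,[Y,X]^{\mathcal F})+g_{\mathcal F}(X,[Z,Y]^{\mathcal F})$ and $2g_{\mathcal F}(\nabla^{\mathcal F,0}_UY,Z)=Ug_{\mathcal F}(Y,Z)-g_{\mathcal F}(Y,[U,Z]^{\mathcal F})-g_{\mathcal F}(Z,[Y,U]^{\mathcal F})$; $R^{\mathcal F,0}$ is its curvature.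 $\widetilde\Omega_{\mathcal F}(X,Y):=[Y,X]^{\mathcal T}$ for $X,Y\in\Gamma(\mathcal F)$, and for $V\in\Gamma(TM)$, $(L_Vg_{\mathcal F})(X,Y):=Vg_{\mathcal F}(X,Y)-g_{\mathcal F}([V,X]^{\mathcal F},Y)-g_{\mathcal F}(X,[V,Y]^{\mathcal F})$. *)

theory Defs
  imports Main "HOL.Real_Vector_Spaces"
begin

text \<open>
Algebraic model of the geometric setting.
  'f  : the ring C^\<infinity>(M) of smooth real functions (a commutative real algebra);
  'v  : the C^\<infinity>(M)-module \<Gamma>(TM) of vector fields;
  sm  : multiplication of a vector field by a function;
  act : V f = derivative of the function f along the vector field V;
  br  : Lie bracket of vector fields;
  PF  : projection TM = F (+) T onto F (so X^F = PF X, X^T = X - PF X);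
  g   : the fiber metric g_F (only evaluated on sections of F);
  nab : the connection nabla^{F,0}, nab V Y = nabla_V Y for Y in \<Gamma>(F).
\<close>

definition secF :: "('v \<Rightarrow> 'v) \<Rightarrow> 'v set" where
  "secF PF = {X. PF X = X}"

definition secT :: "('v::zero \<Rightarrow> 'v) \<Rightarrow> 'v set" where
  "secT PF = {U. PF U = 0}"

definition vector_fields ::
  "('f::{comm_ring_1,real_algebra_1} \<Rightarrow> 'v::ab_group_add \<Rightarrow> 'v) \<Rightarrow>
   ('v \<Rightarrow> 'f \<Rightarrow> 'f) \<Rightarrow> ('v \<Rightarrow> 'v \<Rightarrow> 'v) \<Rightarrow> bool" where
  "vector_fields sm act br \<longleftrightarrow>
     module sm \<and>
     (\<forall>V f h. act V (f + h) = act V f + act V h) \<and>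
     (\<forall>V f h. act V (f * h) = f * act V h + h * act V f) \<and>
     (\<forall>V r. act V (of_real r) = 0) \<and>
     (\<forall>V W f. act (V + W) f = act V f + act W f) \<and>
     (\<forall>V h f. act (sm h V) f = h * act V f) \<and>
     (\<forall>X Y Z. br (X + Y) Z = br X Z + br Y Z) \<and>
     (\<forall>X Y. br X Y = - br Y X) \<and>
     (\<forall>X Y Z. br X (br Y Z) + br Y (br Z X) + br Z (br X Y) = 0) \<and>
     (\<forall>X Y f. br X (sm f Y) = sm f (br X Y) + sm (act X f) Y) \<and>
     (\<forall>X Y f. act (br X Y) f = act X (act Y f) - act Y (act X f))"

definition splitting :: "('f::comm_ring_1 \<Rightarrow> 'v::ab_group_add \<Rightarrow> 'v) \<Rightarrow> ('v \<Rightarrow> 'v) \<Rightarrow> bool" where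
  "splitting sm PF \<longleftrightarrow>
     (\<forall>X Y. PF (X + Y) = PF X + PF Y) \<and>
     (\<forall>f X. PF (sm f X) = sm f (PF X)) \<and>
     (\<forall>X. PF (PF X) = PF X)"

definition fiber_metric ::
  "('f::comm_ring_1 \<Rightarrow> 'v::ab_group_add \<Rightarrow> 'v) \<Rightarrow> ('v \<Rightarrow> 'v) \<Rightarrow> ('v \<Rightarrow> 'v \<Rightarrow> 'f) \<Rightarrow> bool" where
  "fiber_metric sm PF g \<longleftrightarrow>
     (\<forall>X\<in>secF PF. \<forall>Y\<in>secF PF. g X Y = g Y X) \<and>
     (\<forall>X\<in>secF PF. \<forall>Y\<in>secF PF. \<forall>Z\<in>secF PF. g (X + Y) Z = g X Z + g Y Z) \<and>
     (\<forall>f. \<forall>X\<in>secF PF. \<forall>Y\<in>secF PF. g (sm f X) Y = f * g X Y) \<and>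
     (\<forall>X\<in>secF PF. (\<forall>W\<in>secF PF. g X W = 0) \<longrightarrow> X = 0)"

definition connection_on_F ::
  "('f::comm_ring_1 \<Rightarrow> 'v::ab_group_add \<Rightarrow> 'v) \<Rightarrow> ('v \<Rightarrow> 'f \<Rightarrow> 'f) \<Rightarrow> ('v \<Rightarrow> 'v) \<Rightarrow>
   ('v \<Rightarrow> 'v \<Rightarrow> 'v) \<Rightarrow> bool" where
  "connection_on_F sm act PF nab \<longleftrightarrow>
     (\<forall>V. \<forall>Y\<in>secF PF. nab V Y \<in> secF PF) \<and>
     (\<forall>V W. \<forall>Y\<in>secF PF. nab (V + W) Y = nab V Y + nab W Y) \<and>
     (\<forall>f V. \<forall>Y\<in>secF PF. nab (sm f V) Y = sm f (nab V Y)) \<and>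
     (\<forall>V. \<forall>Y\<in>secF PF. \<forall>Z\<in>secF PF. nab V (Y + Z) = nab V Y + nab V Z) \<and>
     (\<forall>f V. \<forall>Y\<in>secF PF. nab V (sm f Y) = sm f (nab V Y) + sm (act V f) Y)"

definition curv :: "('v::ab_group_add \<Rightarrow> 'v \<Rightarrow> 'v) \<Rightarrow> ('v \<Rightarrow> 'v \<Rightarrow> 'v) \<Rightarrow> 'v \<Rightarrow> 'v \<Rightarrow> 'v \<Rightarrow> 'v" where
  "curv br nab X Y Z = nab X (nab Y Z) - nab Y (nab X Z) - nab (br X Y) Z"

definition OmegaF :: "('v::ab_group_add \<Rightarrow> 'v \<Rightarrow> 'v) \<Rightarrow> ('v \<Rightarrow> 'v) \<Rightarrow> 'v \<Rightarrow> 'v \<Rightarrow> 'v" where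
  "OmegaF br PF X Y = br Y X - PF (br Y X)"

definition LieF :: "('v \<Rightarrow> 'f::ab_group_add \<Rightarrow> 'f) \<Rightarrow> ('v \<Rightarrow> 'v \<Rightarrow> 'v) \<Rightarrow> ('v \<Rightarrow> 'v) \<Rightarrow>
     ('v \<Rightarrow> 'v \<Rightarrow> 'f) \<Rightarrow> 'v \<Rightarrow> 'v \<Rightarrow> 'v \<Rightarrow> 'f" where
  "LieF act br PF g V X Y = act V (g X Y) - g (PF (br V X)) Y - g X (PF (br V Y))"

end

theory Submission
  imports Defs
begin

lemma aux1: fixes p q r x y u :: "'f::comm_ring_1"
  shows "(p + q - r - x - - u + - y) - (q + p - r - y - u + - x) - 2*u = 0"
  by (simp add: algebra_simps mult_2)

lemma aux2: fixes a b c u :: "'v::ab_group_add"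
  shows "a - b = c \<Longrightarrow> a - (b + u) = c - u"
  by (simp add: algebra_simps)

lemma aux3: fixes a1 a2 a3 b1 b2 b3 c1 c2 c3 :: "'v::ab_group_add"
  shows "(a1 - b2 - c3) + (a3 - b1 - c2) + (a2 - b3 - c1) = (a1 - b1 - c1) + (a2 - b2 - c2) + (a3 - b3 - c3)"
  by (simp add: algebra_simps)

lemma aux4: fixes j1 j2 j3 a b c d e f :: "'v::ab_group_add"
  shows "j1 + j2 + j3 = 0 \<Longrightarrow> (j1 - a - b) + (j2 - c - d) + (j3 - e - f) = - ((a + b) + (c + d) + (e + f))"
  by (simp add: algebra_simps)

lemma aux5: fixes x p q :: "'f::comm_ring_1"
  shows "2 * x + (p - q - x) = x + p - q"
  by (simp add: algebra_simps mult_2)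

lemma aux6: fixes x p q :: "'f::comm_ring_1"
  shows "x + p - q = - (- p - x + q)"
  by (simp add: algebra_simps)

lemma aux7: fixes x y z :: "'f::comm_ring_1"
  shows "2 * (- (x + y + z)) = - (2 * x + 2 * y + 2 * z)"
  by (simp add: algebra_simps)

lemma aux8: fixes a b c :: "'f::comm_ring_1"
  shows "- (- a + - b + - c) = a + c + b"
  by (simp add: algebra_simps)

lemma aux9: fixes s :: "'f::{comm_ring_1,real_algebra_1}"
  shows "s = 2 * ((1/2) *\<^sub>R s)"
proof -
  have "(2::'f) * of_real (1/2) = of_real 2 * of_real (1/2)" by simp
  also have "\<dots> = of_real (2 * (1/2))" by (simp only: of_real_mult)
  also have "\<dots> = 1" by simp
  finally have h: "(2::'f) * of_real (1/2) = 1" .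
  have "2 * ((1/2) *\<^sub>R s) = (2 * of_real (1/2)) * s" by (simp add: scaleR_conv_of_real mult.assoc)
  then show ?thesis using h by simp
qed

theorem mainTheorem5:
  fixes sm :: "'f::{comm_ring_1,real_algebra_1} \<Rightarrow> 'v::ab_group_add \<Rightarrow> 'v"
    and act :: "'v \<Rightarrow> 'f \<Rightarrow> 'f"
    and br :: "'v \<Rightarrow> 'v \<Rightarrow> 'v"
    and PF :: "'v \<Rightarrow> 'v"
    and g :: "'v \<Rightarrow> 'v \<Rightarrow> 'f"
    and nab :: "'v \<Rightarrow> 'v \<Rightarrow> 'v"
  assumes vf: "vector_fields sm act br"
    and spl: "splitting sm PF"
    and met: "fiber_metric sm PF g"
    and conn: "connection_on_F sm act PF nab"
    and koszulF: "\<And>X Y Z. X \<in> secF PF \<Longrightarrow> Y \<in> secF PF \<Longrightarrow> Z \<in> secF PF \<Longrightarrow>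
       2 * g (nab X Y) Z = act X (g Y Z) + act Y (g Z X) - act Z (g X Y)
         - g Y (PF (br X Z)) - g Z (PF (br Y X)) + g X (PF (br Z Y))"
    and koszulT: "\<And>U Y Z. U \<in> secT PF \<Longrightarrow> Y \<in> secF PF \<Longrightarrow> Z \<in> secF PF \<Longrightarrow>
       2 * g (nab U Y) Z = act U (g Y Z) - g Y (PF (br U Z)) - g Z (PF (br Y U))"
    and XF: "X \<in> secF PF" and YF: "Y \<in> secF PF" and ZF: "Z \<in> secF PF" and WF: "W \<in> secF PF"
  shows "g (curv br nab X Y Z + curv br nab Z X Y + curv br nab Y Z X) W =
    (1/2) *\<^sub>R (LieF act br PF g (OmegaF br PF Y Z) X W
              + LieF act br PF g (OmegaF br PF X Y) Z W
              + LieF act br PF g (OmegaF br PF Z X) Y W)"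
proof -
  have PFadd: "\<And>a b. PF (a + b) = PF a + PF b" and PFPF: "\<And>a. PF (PF a) = PF a"
    using spl unfolding splitting_def by auto
  have PFneg: "\<And>a. PF (- a) = - PF a"
  proof -
    fix a
    have z: "PF 0 = 0" using PFadd[of 0 0] by simp
    have "PF (- a) + PF a = 0" using PFadd[of "- a" a] z by simp
    then show "PF (- a) = - PF a" by (simp add: eq_neg_iff_add_eq_0)
  qed
  have PFdiff: "\<And>a b. PF (a - b) = PF a - PF b"
    by (simp only: diff_conv_add_uminus PFadd PFneg)
  have F_PF: "\<And>a. PF a \<in> secF PF" using PFPF unfolding secF_def by auto
  have F_add: "\<And>a b. a \<in> secF PF \<Longrightarrow> b \<in> secF PF \<Longrightarrow> a + b \<in> secF PF"
    using PFadd unfolding secF_def by auto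
  have F_neg: "\<And>a. a \<in> secF PF \<Longrightarrow> - a \<in> secF PF"
    using PFneg unfolding secF_def by auto
  have F_diff: "\<And>a b. a \<in> secF PF \<Longrightarrow> b \<in> secF PF \<Longrightarrow> a - b \<in> secF PF"
    using PFdiff unfolding secF_def by auto
  have T_U: "\<And>a. a - PF a \<in> secT PF" using PFdiff PFPF unfolding secT_def by auto
  have gsym: "\<And>a b. a \<in> secF PF \<Longrightarrow> b \<in> secF PF \<Longrightarrow> g a b = g b a"
    and gadd: "\<And>a b c. a \<in> secF PF \<Longrightarrow> b \<in> secF PF \<Longrightarrow> c \<in> secF PF \<Longrightarrow> g (a + b) c = g a c + g b c"
    and gnd: "\<And>a. a \<in> secF PF \<Longrightarrow> (\<forall>w\<in>secF PF. g a w = 0) \<Longrightarrow> a = 0"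
    using met unfolding fiber_metric_def by auto
  have gneg: "\<And>a c. a \<in> secF PF \<Longrightarrow> c \<in> secF PF \<Longrightarrow> g (- a) c = - g a c"
  proof -
    fix a c assume a: "a \<in> secF PF" and c: "c \<in> secF PF"
    have "g (a + - a) c = g a c + g (- a) c" using gadd[OF a F_neg[OF a] c] .
    moreover have "g (a + - a) c = g 0 c" by simp
    moreover have "g 0 c = 0"
    proof -
      have z: "(0::'v) \<in> secF PF" using F_diff[OF a a] by simp
      have "g (0 + 0) c = g 0 c + g 0 c" using gadd[OF z z c] .
      then show ?thesis by simp
    qed
    ultimately show "g (- a) c = - g a c" by (simp add: eq_neg_iff_add_eq_0 add.commute)
  qed
  have gdiff: "\<And>a b c. a \<in> secF PF \<Longrightarrow> b \<in> secF PF \<Longrightarrow> c \<in> secF PF \<Longrightarrow> g (a - b) c = g a c - g b c"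
  proof -
    fix a b c assume a: "a \<in> secF PF" and b: "b \<in> secF PF" and c: "c \<in> secF PF"
    have "g (a + - b) c = g a c + g (- b) c" using gadd[OF a F_neg[OF b] c] .
    then show "g (a - b) c = g a c - g b c" using gneg[OF b c] by (simp only: diff_conv_add_uminus)
  qed
  have gneg2: "\<And>a c. a \<in> secF PF \<Longrightarrow> c \<in> secF PF \<Longrightarrow> g c (- a) = - g c a"
  proof -
    fix a c assume a: "a \<in> secF PF" and c: "c \<in> secF PF"
    have "g c (- a) = g (- a) c" using gsym[OF c F_neg[OF a]] .
    also have "\<dots> = - g a c" using gneg[OF a c] .
    also have "\<dots> = - g c a" using gsym[OF a c] by simp
    finally show "g c (- a) = - g c a" .
  qed
  have nabF: "\<And>V Y. Y \<in> secF PF \<Longrightarrow> nab V Y \<in> secF PF"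
    and nabadd1: "\<And>V W Y. Y \<in> secF PF \<Longrightarrow> nab (V + W) Y = nab V Y + nab W Y"
    and nabadd2: "\<And>V Y Z. Y \<in> secF PF \<Longrightarrow> Z \<in> secF PF \<Longrightarrow> nab V (Y + Z) = nab V Y + nab V Z"
    using conn unfolding connection_on_F_def by auto
  have nabdiff2: "\<And>V Y Z. Y \<in> secF PF \<Longrightarrow> Z \<in> secF PF \<Longrightarrow> nab V (Y - Z) = nab V Y - nab V Z"
  proof -
    fix V Y Z assume Y: "Y \<in> secF PF" and Z: "Z \<in> secF PF"
    have "nab V (Y - Z + Z) = nab V (Y - Z) + nab V Z" using nabadd2[OF F_diff[OF Y Z] Z] .
    then show "nab V (Y - Z) = nab V Y - nab V Z" by (simp add: eq_diff_eq)
  qed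
  have vfc: "(\<forall>V W f. act (V + W) f = act V f + act W f) \<and>
     (\<forall>X Y Z. br (X + Y) Z = br X Z + br Y Z) \<and>
     (\<forall>X Y. br X Y = - br Y X) \<and>
     (\<forall>X Y Z. br X (br Y Z) + br Y (br Z X) + br Z (br X Y) = 0)"
    using vf unfolding vector_fields_def by (elim conjE) (intro conjI; assumption)
  have actadd: "\<And>V W f. act (V + W) f = act V f + act W f" using vfc by blast
  have bradd: "\<And>X Y Z. br (X + Y) Z = br X Z + br Y Z" using vfc by blast
  have brasym: "\<And>X Y. br X Y = - br Y X" using vfc by blast
  have jac: "\<And>X Y Z. br X (br Y Z) + br Y (br Z X) + br Z (br X Y) = 0" using vfc by blast
  have actneg: "\<And>V f. act (- V) f = - act V f"
  proof -
    fix V f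
    have z: "act 0 f = 0" using actadd[of 0 0 f] by simp
    have "act (- V) f + act V f = 0" using actadd[of "- V" V f] z by simp
    then show "act (- V) f = - act V f" by (simp add: eq_neg_iff_add_eq_0)
  qed
  have bradd2: "\<And>X Y Z. br X (Y + Z) = br X Y + br X Z"
  proof -
    fix X Y Z
    have "br X (Y + Z) = - br (Y + Z) X" by (rule brasym)
    also have "\<dots> = - br Y X - br Z X" by (simp add: bradd)
    also have "\<dots> = br X Y + br X Z" using brasym[of X Y] brasym[of X Z] by simp
    finally show "br X (Y + Z) = br X Y + br X Z" .
  qed
  have brneg2: "\<And>X Y. br X (- Y) = - br X Y"
  proof -
    fix X Y
    have z: "br X 0 = 0" using bradd2[of X 0 0] by simp
    have "br X (- Y) + br X Y = 0" using bradd2[of X "- Y" Y] z by simp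
    then show "br X (- Y) = - br X Y" by (simp add: eq_neg_iff_add_eq_0)
  qed
  have brdiff2: "\<And>X Y Z. br X (Y - Z) = br X Y - br X Z"
    by (simp only: diff_conv_add_uminus bradd2 brneg2)
  have brneg1: "\<And>X Y. br (- X) Y = - br X Y"
  proof -
    fix X Y
    have "br (- X) Y = - br Y (- X)" by (rule brasym)
    also have "\<dots> = br Y X" by (simp add: brneg2)
    also have "\<dots> = - br X Y" by (rule brasym)
    finally show "br (- X) Y = - br X Y" .
  qed
  have two_cancel: "\<And>a b::'f. 2 * a = 2 * b \<Longrightarrow> a = b"
  proof -
    fix a b :: 'f assume "2 * a = 2 * b"
    then have "(of_real (1/2) :: 'f) * (2 * a) = of_real (1/2) * (2 * b)" by simp
    moreover have "(of_real (1/2) :: 'f) * 2 = 1"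
      proof -
        have "(of_real (1/2) :: 'f) * 2 = of_real (1/2) * of_real 2" by simp
        also have "\<dots> = of_real ((1/2) * 2)" by (simp only: of_real_mult)
        also have "\<dots> = 1" by simp
        finally show ?thesis .
      qed

    ultimately show "a = b" by (simp add: mult.assoc[symmetric])
  qed
  have tors: "\<And>A B. A \<in> secF PF \<Longrightarrow> B \<in> secF PF \<Longrightarrow> nab A B - nab B A = PF (br A B)"
  proof -
    fix A B assume A: "A \<in> secF PF" and B: "B \<in> secF PF"
    have "\<forall>w\<in>secF PF. g (nab A B - nab B A - PF (br A B)) w = 0"
    proof
      fix w assume w: "w \<in> secF PF"
      have e1: "2 * g (nab A B) w = act A (g B w) + act B (g w A) - act w (g A B)
         - g B (PF (br A w)) - g w (PF (br B A)) + g A (PF (br w B))"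
        using koszulF[OF A B w] .
      have e2: "2 * g (nab B A) w = act B (g A w) + act A (g w B) - act w (g B A)
         - g A (PF (br B w)) - g w (PF (br A B)) + g B (PF (br w A))"
        using koszulF[OF B A w] .
      have s1: "g B w = g w B" "g A w = g w A" "g B A = g A B" using gsym A B w by auto
      have s2: "PF (br w B) = - PF (br B w)" "PF (br w A) = - PF (br A w)" "PF (br B A) = - PF (br A B)"
        using brasym[of w B] brasym[of w A] brasym[of B A] PFneg by simp_all
      have s3: "g B (- PF (br A w)) = - g B (PF (br A w))" "g A (- PF (br B w)) = - g A (PF (br B w))"
        "g w (- PF (br A B)) = - g w (PF (br A B))"
        using gneg2 F_PF A B w by auto
      have "2 * g (nab A B - nab B A - PF (br A B)) w = 2 * g (nab A B) w - 2 * g (nab B A) w - 2 * g (PF (br A B)) w"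
      proof -
        have nA: "nab A B \<in> secF PF" and nB: "nab B A \<in> secF PF" using nabF A B by auto
        have "g (nab A B - nab B A - PF (br A B)) w = g (nab A B - nab B A) w - g (PF (br A B)) w"
          using gdiff[OF F_diff[OF nA nB] F_PF w] .
        also have "\<dots> = g (nab A B) w - g (nab B A) w - g (PF (br A B)) w"
          using gdiff[OF nA nB w] by simp
        finally show ?thesis by (simp add: right_diff_distrib)
      qed
      also have "\<dots> = 0"
      proof -
        have s4: "g w (PF (br A B)) = g (PF (br A B)) w" using gsym[OF w F_PF] .
        show ?thesis unfolding e1 e2 s2 s3 s1 s4 by (rule aux1)
      qed
      finally show "g (nab A B - nab B A - PF (br A B)) w = 0" using two_cancel by simp
    qed
    then have "nab A B - nab B A - PF (br A B) = 0"
      by (intro gnd) (simp_all add: F_diff nabF F_PF A B)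
    then show "nab A B - nab B A = PF (br A B)" by simp
  qed
  define UX where "UX = br Y Z - PF (br Y Z)"
  define UY where "UY = br Z X - PF (br Z X)"
  define UZ where "UZ = br X Y - PF (br X Y)"
  have UT: "UX \<in> secT PF" "UY \<in> secT PF" "UZ \<in> secT PF" unfolding UX_def UY_def UZ_def using T_U by auto
  have piece: "\<And>A B C U. A \<in> secF PF \<Longrightarrow> B \<in> secF PF \<Longrightarrow> C \<in> secF PF \<Longrightarrow> U = br B C - PF (br B C) \<Longrightarrow>
     nab A (nab B C - nab C B) - nab (br B C) A = PF (br A (br B C)) - PF (br A U) - nab U A"
  proof -
    fix A B C U assume A: "A \<in> secF PF" and B: "B \<in> secF PF" and C: "C \<in> secF PF"
      and U: "U = br B C - PF (br B C)"
    have u1: "br B C = PF (br B C) + U" using U by simp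
    have h2: "nab (br B C) A = nab (PF (br B C)) A + nab U A"
      using nabadd1[OF A, of "PF (br B C)" U] unfolding u1[symmetric] .
    have u2: "PF (br B C) = br B C - U" using U by simp
    have t: "nab A (PF (br B C)) - nab (PF (br B C)) A = PF (br A (PF (br B C)))"
      using tors A F_PF by blast
    have "PF (br A (PF (br B C))) = PF (br A (br B C)) - PF (br A U)"
      unfolding u2 brdiff2 PFdiff ..
    with t have h: "nab A (PF (br B C)) - nab (PF (br B C)) A = PF (br A (br B C)) - PF (br A U)"
      by (rule trans)
    show "nab A (nab B C - nab C B) - nab (br B C) A = PF (br A (br B C)) - PF (br A U) - nab U A"
      unfolding tors[OF B C] h2 by (rule aux2[OF h])
  qed
  have Aeq: "curv br nab X Y Z + curv br nab Z X Y + curv br nab Y Z X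
      = - ((PF (br X UX) + nab UX X) + (PF (br Y UY) + nab UY Y) + (PF (br Z UZ) + nab UZ Z))"
  proof -
    have p1: "nab X (nab Y Z - nab Z Y) - nab (br Y Z) X = PF (br X (br Y Z)) - PF (br X UX) - nab UX X"
      using piece XF YF ZF UX_def by blast
    have p2: "nab Y (nab Z X - nab X Z) - nab (br Z X) Y = PF (br Y (br Z X)) - PF (br Y UY) - nab UY Y"
      using piece XF YF ZF UY_def by blast
    have p3: "nab Z (nab X Y - nab Y X) - nab (br X Y) Z = PF (br Z (br X Y)) - PF (br Z UZ) - nab UZ Z"
      using piece XF YF ZF UZ_def by blast
    have z0: "PF 0 = 0" using PFadd[of 0 0] by simp
    have j: "PF (br X (br Y Z)) + PF (br Y (br Z X)) + PF (br Z (br X Y)) = 0"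
      using arg_cong[OF jac[of X Y Z], of PF] unfolding PFadd z0 .
    have d1: "nab X (nab Y Z - nab Z Y) = nab X (nab Y Z) - nab X (nab Z Y)"
      using nabdiff2 nabF YF ZF by blast
    have d2: "nab Y (nab Z X - nab X Z) = nab Y (nab Z X) - nab Y (nab X Z)"
      using nabdiff2 nabF XF ZF by blast
    have d3: "nab Z (nab X Y - nab Y X) = nab Z (nab X Y) - nab Z (nab Y X)"
      using nabdiff2 nabF XF YF by blast
    have "curv br nab X Y Z + curv br nab Z X Y + curv br nab Y Z X =
       (nab X (nab Y Z - nab Z Y) - nab (br Y Z) X) + (nab Y (nab Z X - nab X Z) - nab (br Z X) Y)
       + (nab Z (nab X Y - nab Y X) - nab (br X Y) Z)"
      unfolding curv_def d1 d2 d3 by (rule aux3)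
    also have "\<dots> = - ((PF (br X UX) + nab UX X) + (PF (br Y UY) + nab UY Y) + (PF (br Z UZ) + nab UZ Z))"
      unfolding p1 p2 p3 by (rule aux4[OF j])
    finally show ?thesis .
  qed
  have sc: "\<And>A U. A \<in> secF PF \<Longrightarrow> U \<in> secT PF \<Longrightarrow>
     2 * g (PF (br A U) + nab U A) W = - LieF act br PF g (- U) A W"
  proof -
    fix A U assume A: "A \<in> secF PF" and U: "U \<in> secT PF"
    have k: "2 * g (nab U A) W = act U (g A W) - g A (PF (br U W)) - g W (PF (br A U))"
      using koszulT[OF U A WF] .
    have s: "g W (PF (br A U)) = g (PF (br A U)) W" using gsym WF F_PF by blast
    have "2 * g (PF (br A U) + nab U A) W = 2 * (g (PF (br A U)) W + g (nab U A) W)"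
      using gadd[OF F_PF nabF[OF A] WF] by simp
    also have "\<dots> = 2 * g (PF (br A U)) W + 2 * g (nab U A) W"
      by (rule distrib_left)
    also have "\<dots> = g (PF (br A U)) W + act U (g A W) - g A (PF (br U W))"
      unfolding k s by (rule aux5)
    also have "\<dots> = - (- act U (g A W) - g (PF (br A U)) W + g A (PF (br U W)))"
      by (rule aux6)
    also have "- act U (g A W) - g (PF (br A U)) W + g A (PF (br U W)) = LieF act br PF g (- U) A W"
    proof -
      have b1: "PF (br (- U) A) = PF (br A U)" using brneg1[of U A] brasym[of U A] PFneg by simp
      have b2: "g A (PF (br (- U) W)) = - g A (PF (br U W))"
        using brneg1[of U W] PFneg gneg2[OF F_PF A, of "br U W"] by simp
      show ?thesis unfolding LieF_def actneg b1 b2 diff_minus_eq_add ..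
    qed
    finally show "2 * g (PF (br A U) + nab U A) W = - LieF act br PF g (- U) A W" .
  qed
  have om: "OmegaF br PF Y Z = - UX" "OmegaF br PF X Y = - UZ" "OmegaF br PF Z X = - UY"
    unfolding OmegaF_def UX_def UY_def UZ_def using brasym[of Z Y] brasym[of Y X] brasym[of X Z] PFneg by simp_all
  have FF: "\<And>A U. A \<in> secF PF \<Longrightarrow> PF (br A U) + nab U A \<in> secF PF" using F_add F_PF nabF by blast
  define s1 where "s1 = PF (br X UX) + nab UX X"
  define s2 where "s2 = PF (br Y UY) + nab UY Y"
  define s3 where "s3 = PF (br Z UZ) + nab UZ Z"
  have S: "s1 \<in> secF PF" "s2 \<in> secF PF" "s3 \<in> secF PF" unfolding s1_def s2_def s3_def using FF XF YF ZF by auto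
  have gs: "g (- (s1 + s2 + s3)) W = - (g s1 W + g s2 W + g s3 W)"
    using gneg[OF F_add[OF F_add[OF S(1) S(2)] S(3)] WF] gadd[OF F_add[OF S(1) S(2)] S(3) WF] gadd[OF S(1) S(2) WF]
    by simp
  have "2 * g (curv br nab X Y Z + curv br nab Z X Y + curv br nab Y Z X) W
      = - (2 * g s1 W + 2 * g s2 W + 2 * g s3 W)"
    unfolding Aeq s1_def[symmetric] s2_def[symmetric] s3_def[symmetric] gs by (rule aux7)
  also have "\<dots> = LieF act br PF g (OmegaF br PF Y Z) X W
              + LieF act br PF g (OmegaF br PF X Y) Z W
              + LieF act br PF g (OmegaF br PF Z X) Y W"
    unfolding s1_def s2_def s3_def om sc[OF XF UT(1)] sc[OF YF UT(2)] sc[OF ZF UT(3)] by (rule aux8)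
  also have "\<dots> = 2 * ((1/2) *\<^sub>R (LieF act br PF g (OmegaF br PF Y Z) X W
              + LieF act br PF g (OmegaF br PF X Y) Z W
              + LieF act br PF g (OmegaF br PF Z X) Y W))"
    by (rule aux9)
  finally show ?thesis using two_cancel by blast
qed

end
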